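(* Let $M(n)$ denote the maximum cardinality of a set $\mathsf{B}\subseteq\{0,1\}^n$ such that any two distinct strings $\mathbf{x},\mathbf{y}\in\mathsf{B}$ have a skewincidence. Then for all sufficiently large $n$, $$2^n-2^{0.96n}\le M(n)\le 2^n-2^{0.69n}.$$
   Context: Two binary strings $\mathbf{x}=x_1\dots x_n$ and $\mathbf{y}=y_1\dots y_n$ in $\{0,1\}^n$ have a skew coincidence (skewincidence) if there is a coordinate $i\in[n-1]$ with $x_i=y_{i+1}=1$ or $x_{i+1}=y_i=1$. *)

theory Defs
  imports Complex_Main
begin

text \<open>Binary strings of length n are modelled as bool lists of length n
  (True = 1). Positions are 0-based: the paper's coordinate i in [n-1]
  corresponds to list index i-1, so pairs (i, i+1) with i + 1 < n.\<close>

definition binstrings :: "nat \<Rightarrow> bool list set" where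
  "binstrings n = {x. length x = n}"

definition skewincident :: "bool list \<Rightarrow> bool list \<Rightarrow> bool" where
  "skewincident x y \<longleftrightarrow>
     (\<exists>i. i + 1 < length x \<and>
          ((x ! i \<and> y ! (i + 1)) \<or> (x ! (i + 1) \<and> y ! i)))"

definition skew_family :: "nat \<Rightarrow> bool list set \<Rightarrow> bool" where
  "skew_family n B \<longleftrightarrow> B \<subseteq> binstrings n \<and>
     (\<forall>x\<in>B. \<forall>y\<in>B. x \<noteq> y \<longrightarrow> skewincident x y)"

definition M :: "nat \<Rightarrow> nat" where
  "M n = Max {card B | B. skew_family n B}"

end

theory Submission imports Defs begin

fun noadj :: "bool list \<Rightarrow> bool" where
  "noadj (a#b#r) = (\<not>(a\<and>b) \<and> noadj (b#r))" | "noadj _ = True"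

lemma noadj_nth: "noadj xs \<Longrightarrow> i+1 < length xs \<Longrightarrow> \<not>(xs!i \<and> xs!(i+1))"
proof (induction xs arbitrary: i rule: noadj.induct)
  case (1 a b r)
  then show ?case by (cases i) auto
qed auto

lemma noskew_sub:
  assumes "noadj x" "length y = length x" "\<forall>i<length x. y!i \<longrightarrow> x!i"
  shows "\<not> skewincident x y"
  unfolding skewincident_def using noadj_nth[OF assms(1)] assms(3) by fastforce

definition Z :: "nat \<Rightarrow> bool list set" where "Z m = {z. length z = m \<and> noadj z}"

lemma noadj_F: "noadj (False # z) = noadj z" by (cases z) auto

lemma finite_bin: "finite {xs::bool list. length xs = n}"
  using finite_lists_length_eq[of "UNIV::bool set" n] by simp

lemma card_bin: "card (binstrings n) = 2^n"
  using card_lists_length_eq[of "UNIV::bool set" n] by (simp add: binstrings_def)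

lemma finite_Z: "finite (Z m)" unfolding Z_def by (rule finite_subset[OF _ finite_bin[of m]]) auto

lemma card_Z_rec: "card (Z (m+2)) \<ge> card (Z (m+1)) + card (Z m)"
proof -
  have sub: "(Cons False) ` Z (m+1) \<union> (\<lambda>z. True#False#z) ` Z m \<subseteq> Z (m+2)"
    by (auto simp: Z_def noadj_F)
  have "card ((Cons False) ` Z (m+1) \<union> (\<lambda>z. True#False#z) ` Z m)
       = card (Z (m+1)) + card (Z m)"
    by (subst card_Un_disjoint) (auto simp: finite_Z card_image inj_on_def)
  with card_mono[OF finite_Z sub] show ?thesis by simp
qed

lemma card_Z_ge: "real (card (Z m)) \<ge> (1.618::real)^m"
proof -
  have "real (card (Z m)) \<ge> 1.618^m \<and> real (card (Z (m+1))) \<ge> (1.618::real)^(m+1)" for m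
  proof (induction m)
    case 0
    have "Z 0 = {[]}" by (auto simp: Z_def)
    moreover have "Z 1 = {[True],[False]}" by (auto simp: Z_def length_Suc_conv)
    ultimately show ?case by simp
  next
    case (Suc m)
    have "(1.618::real)^(m+2) = 1.618^m * 1.618^2" by (rule power_add)
    also have "\<dots> \<le> 1.618^m * (1.618 + 1)" by (intro mult_left_mono) (auto simp: power2_eq_square)
    also have "\<dots> = 1.618^(m+1) + 1.618^m" by (simp add: algebra_simps)
    also have "\<dots> \<le> real (card (Z (m+1))) + real (card (Z m))" using Suc by simp
    also have "\<dots> \<le> real (card (Z (m+2)))" using card_Z_rec[of m] by linarith
    finally show ?case using Suc by simp
  qed
  thus ?thesis by simp
qed

lemma upper_fam:
  assumes "skew_family (m+2) B"
  shows "card B + card (Z m) \<le> 2^(m+2)"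
proof -
  have Bs: "B \<subseteq> binstrings (m+2)" and sk: "\<forall>x\<in>B. \<forall>y\<in>B. x \<noteq> y \<longrightarrow> skewincident x y"
    using assms by (auto simp: skew_family_def)
  define g where "g z = (if False#False#z \<in> B then True#False#z else False#False#z)" for z
  have ns: "\<not> skewincident (True#False#z) (False#False#z)" if "z \<in> Z m" for z
  proof (rule noskew_sub)
    show "noadj (True#False#z)" using that by (simp add: Z_def noadj_F)
    show "\<forall>i<length (True # False # z). (False # False # z) ! i \<longrightarrow> (True # False # z) ! i"
      by (auto simp: nth_Cons split: nat.splits)
  qed simp
  have gin: "g ` Z m \<subseteq> binstrings (m+2) - B"
  proof
    fix w assume "w \<in> g ` Z m"
    then obtain z where z: "z \<in> Z m" "w = g z" by auto
    have "length z = m" using z by (simp add: Z_def)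
    then show "w \<in> binstrings (m+2) - B" using z ns[OF z(1)] sk
      by (auto simp: g_def binstrings_def)
  qed
  have inj: "inj_on g (Z m)" by (auto simp: inj_on_def g_def split: if_splits)
  have fin: "finite (binstrings (m+2))" using finite_bin by (simp add: binstrings_def)
  have "card (Z m) \<le> card (binstrings (m+2) - B)"
    using card_mono[OF _ gin] fin card_image[OF inj] by auto
  also have "\<dots> = 2^(m+2) - card B" using card_Diff_subset[OF finite_subset[OF Bs fin] Bs] card_bin by simp
  finally show ?thesis using card_mono[OF fin Bs] card_bin[of "m+2"] by linarith
qed

lemma M_props: "(\<exists>B. skew_family n B \<and> M n = card B) \<and> (\<forall>B. skew_family n B \<longrightarrow> card B \<le> M n)"
proof -
  let ?S = "{card B | B. skew_family n B}"
  have "?S \<subseteq> {..2^n}"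
  proof
    fix k assume "k \<in> ?S"
    then obtain B where "skew_family n B" "k = card B" by auto
    then show "k \<in> {..2^n}" using card_mono[OF _ , of "binstrings n" B] card_bin[of n] finite_bin
      by (auto simp: skew_family_def binstrings_def)
  qed
  hence fin: "finite ?S" by (rule finite_subset) auto
  have ne: "?S \<noteq> {}" using skew_family_def by auto (* B = {} *)
  show ?thesis using Max_in[OF fin ne] Max_ge[OF fin] by (auto simp: M_def)
qed

lemma pow_eventually:
  fixes a b K :: real assumes "0 < b" "b < a"
  shows "\<exists>N. \<forall>n\<ge>N. K * b^n \<le> a^n"
proof -
  obtain N where N0: "K < (a/b)^N" using real_arch_pow[of "a/b" K] assms by auto
  have N: "K \<le> (a/b)^n" if "n \<ge> N" for n
  proof -
    have "1 \<le> a/b" using assms by simp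
    thus ?thesis using N0 power_increasing[OF that, of "a/b"] by linarith
  qed
  have "K * b^n \<le> a^n" if "n \<ge> N" for n
  proof -
    have "K * b^n \<le> (a/b)^n * b^n" using N[OF that] assms by (intro mult_right_mono) auto
    also have "\<dots> = a^n" using assms by (simp add: power_divide)
    finally show ?thesis .
  qed
  thus ?thesis by blast
qed

lemma c069: "2 powr (0.69::real) < 1.618"
proof -
  have "(2 powr (0.69::real))^100 = 2 powr 69" by (simp add: powr_realpow[symmetric] powr_powr)
  also have "\<dots> = 2^69" by (simp add: powr_realpow[symmetric])
  also have "\<dots> < (1.618::real)^100" by (simp add: power_divide)
  finally show ?thesis by (rule power_less_imp_less_base) simp
qed

lemma upper: "\<exists>N. \<forall>n\<ge>N. real (M n) \<le> 2 ^ n - 2 powr (0.69 * real n)"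
proof -
  obtain N where N: "\<And>n. n \<ge> N \<Longrightarrow> 1.618^2 * (2 powr (0.69::real))^n \<le> 1.618^n"
    using pow_eventually[OF _ c069, of "1.618^2"] by auto
  have "real (M n) \<le> 2 ^ n - 2 powr (0.69 * real n)" if "n \<ge> N + 2" for n
  proof -
    obtain m where m: "n = m + 2" using \<open>n \<ge> N+2\<close> by (metis add.commute le_add_diff_inverse2 le_add2 order_trans)
    obtain B where B: "skew_family n B" "M n = card B" using M_props by blast
    have "card B + card (Z m) \<le> 2^n" using upper_fam B m by simp
    hence "real (card B) + real (card (Z m)) \<le> 2^n" by (metis of_nat_add of_nat_le_iff of_nat_numeral of_nat_power)
    hence "real (M n) \<le> 2^n - real (card (Z m))" using B by simp
    moreover have "2 powr (0.69 * real n) \<le> real (card (Z m))"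
    proof -
      have "2 powr (0.69 * real n) = (2 powr 0.69)^n" by (simp add: powr_realpow[symmetric] powr_powr mult.commute)
      also have "1.618^2 * \<dots> \<le> 1.618^n" using N \<open>n \<ge> N+2\<close> by simp
      finally have "2 powr (0.69 * real n) \<le> 1.618^n / 1.618^2" by (simp add: field_simps)
      also have "\<dots> = 1.618^m" using m by (simp add: power_add power2_eq_square)
      also have "\<dots> \<le> real (card (Z m))" by (rule card_Z_ge)
      finally show ?thesis .
    qed
    ultimately show ?thesis by linarith
  qed
  thus ?thesis by blast
qed

definition phi5 :: "bool \<Rightarrow> bool \<Rightarrow> bool \<Rightarrow> bool \<Rightarrow> bool \<Rightarrow> int" where
  "phi5 a b c d e = (if a then (if b then (if c then (if d then (if e then 6 else 6) else (if e then 6 else 7)) else (if d then (if e then 5 else 2) else (if e then 4 else 2))) else (if c then (if d then (if e then 7 else 7) else (if e then 3 else 3)) else (if d then (if e then 5 else 3) else (if e then 1 else (-1))))) else (if b then (if c then (if d then (if e then 6 else 6) else (if e then 6 else 7)) else (if d then (if e then 2 else 3) else (if e then 3 else 4))) else (if c then (if d then (if e then 7 else 7) else (if e then 3 else 3)) else (if d then (if e then 3 else 4) else (if e then 0 else 0)))))"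

definition Gp :: "bool \<Rightarrow> bool \<Rightarrow> bool \<Rightarrow> bool \<Rightarrow> bool \<Rightarrow> bool \<Rightarrow> bool \<Rightarrow> bool \<Rightarrow> int" where
  "Gp a b c d e f g h = (if a then (if b then (if c then (if d then (if e then (if f then (if g then (if h then 0 else 0) else (if h then 0 else 0)) else (if g then (if h then 0 else 0) else (if h then 0 else 0))) else (if f then (if g then (if h then 0 else 0) else (if h then 0 else 0)) else (if g then (if h then 0 else 0) else (if h then 0 else 2)))) else (if e then (if f then (if g then (if h then 0 else 0) else (if h then 0 else 0)) else (if g then (if h then 0 else 0) else (if h then 0 else 0))) else (if f then (if g then (if h then 0 else 0) else (if h then 0 else 0)) else (if g then (if h then 0 else 0) else (if h then 0 else 2))))) else (if d then (if e then (if f then (if g then (if h then 0 else 0) else (if h then 0 else 0)) else (if g then (if h then 0 else 0) else (if h then 0 else 0))) else (if f then (if g then (if h then 0 else 0) else (if h then 0 else 0)) else (if g then (if h then 0 else 0) else (if h then 2 else 2)))) else (if e then (if f then (if g then (if h then 0 else 0) else (if h then 0 else 0)) else (if g then (if h then 0 else 0) else (if h then 0 else 0))) else (if f then (if g then (if h then 0 else 0) else (if h then 0 else 0)) else (if g then (if h then 0 else 0) else (if h then 1 else 1)))))) else (if c then (if d then (if e then (if f then (if g then (if h then 0 else 0) else (if h then 0 else 0)) else (if g then (if h then 0 else 0) else (if h then 0 else 2))) else (if f then (if g then (if h then 0 else 0) else (if h then 0 else 0)) else (if g then (if h then 0 else 0) else (if h then 0 else 3)))) else (if e then (if f then (if g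 then (if h then 0 else 0) else (if h then 0 else 0)) else (if g then (if h then 0 else 2) else (if h then 0 else 1))) else (if f then (if g then (if h then 0 else 0) else (if h then 0 else 0)) else (if g then (if h then 0 else 2) else (if h then 0 else 0))))) else (if d then (if e then (if f then (if g then (if h then 0 else 0) else (if h then 0 else 0)) else (if g then (if h then 0 else 0) else (if h then 2 else 1))) else (if f then (if g then (if h then 0 else 0) else (if h then 0 else 0)) else (if g then (if h then 0 else 0) else (if h then 3 else 2)))) else (if e then (if f then (if g then (if h then 0 else 0) else (if h then 0 else 0)) else (if g then (if h then 2 else 1) else (if h then 1 else 0))) else (if f then (if g then (if h then 0 else 0) else (if h then 0 else 0)) else (if g then (if h then 2 else 1) else (if h then 0 else 0))))))) else (if b then (if c then (if d then (if e then (if f then (if g then (if h then 0 else 0) else (if h then 0 else 0)) else (if g then (if h then 0 else 0) else (if h then 0 else 0))) else (if f then (if g then (if h then 0 else 0) else (if h then 0 else 0)) else (if g then (if h then 0 else 0) else (if h then 0 else 2)))) else (if e then (if f then (if g then (if h then 0 else 0) else (if h then 0 else 0)) else (if g then (if h then 0 else 0) else (if h then 0 else 0))) else (if f then (if g then (if h then 0 else 0) else (if h then 0 else 0)) else (if g then (if h then 0 else 0) else (if h then 0 else 2))))) else (if d then (if e then (if f then (if g then (if h then 0 else 0) else (if h then 0 else 0)) else (if g then (if h then 0 else 0) else (if h then 0 else 0))) else (if f then (if g then (if h then 0 else 0) else (if h then 2 else 2)) else (if g then (if h then 0 else 0) else (if h then 3 else 0)))) else (if e then (if f then (if g then (if h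 then 0 else 0) else (if h then 0 else 0)) else (if g then (if h then 0 else 0) else (if h then 0 else 0))) else (if f then (if g then (if h then 0 else 0) else (if h then 2 else 2)) else (if g then (if h then 0 else 0) else (if h then 3 else 0)))))) else (if c then (if d then (if e then (if f then (if g then (if h then 0 else 0) else (if h then 0 else 0)) else (if g then (if h then 0 else 0) else (if h then 0 else 2))) else (if f then (if g then (if h then 0 else 0) else (if h then 0 else 0)) else (if g then (if h then 0 else 0) else (if h then 0 else 3)))) else (if e then (if f then (if g then (if h then 0 else 0) else (if h then 0 else 0)) else (if g then (if h then 0 else 2) else (if h then 0 else 1))) else (if f then (if g then (if h then 0 else 0) else (if h then 0 else 0)) else (if g then (if h then 0 else 2) else (if h then 0 else 0))))) else (if d then (if e then (if f then (if g then (if h then 0 else 0) else (if h then 2 else 1)) else (if g then (if h then 0 else 0) else (if h then 3 else 0))) else (if f then (if g then (if h then 0 else 0) else (if h then 3 else 3)) else (if g then (if h then 0 else 0) else (if h then 4 else 0)))) else (if e then (if f then (if g then (if h then 2 else 2) else (if h then 2 else 1)) else (if g then (if h then 3 else 0) else (if h then 2 else 0))) else (if f then (if g then (if h then 2 else 2) else (if h then 0 else 0)) else (if g then (if h then 3 else 0) else (if h then 0 else 0))))))))"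

definition V4 :: "bool \<Rightarrow> bool \<Rightarrow> bool \<Rightarrow> bool \<Rightarrow> real" where
  "V4 a b c d = (if a then (if b then (if c then (if d then 109 else 155) else (if d then 156 else 237)) else (if c then (if d then 101 else 197) else (if d then 148 else 294))) else (if b then (if c then (if d then 109 else 155) else (if d then 160 else 219)) else (if c then (if d then 101 else 197) else (if d then 148 else 286))))"
lemma step_check:
  assumes "\<not>(a1\<and>b2)" "\<not>(a2\<and>b1)" "\<not>(a2\<and>b3)" "\<not>(a3\<and>b2)" "\<not>(a3\<and>b4)" "\<not>(a4\<and>b3)" "\<not>(a4\<and>b5)" "\<not>(a5\<and>b4)"
  shows "phi5 a1 a2 a3 a4 a5 + phi5 b1 b2 b3 b4 b5 + Gp a2 a3 a4 a5 b2 b3 b4 b5 \<le> 6 + Gp a1 a2 a3 a4 b1 b2 b3 b4"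
  using assms unfolding phi5_def Gp_def
  by (cases a1; cases a2; cases a3; cases a4; cases a5; cases b1; cases b2; cases b3; cases b4; cases b5) simp_all

lemma Gp_bounds: "0 \<le> Gp a b c d e f g h \<and> Gp a b c d e f g h \<le> 4"
  unfolding Gp_def by (cases a; cases b; cases c; cases d; cases e; cases f; cases g; cases h) simp_all

lemma phi5_le: "phi5 a b c d e \<le> 7"
  unfolding phi5_def by (cases a; cases b; cases c; cases d; cases e) simp_all

lemma V4_ge: "1 \<le> V4 a b c d"
  unfolding V4_def by (cases a; cases b; cases c; cases d) simp_all

fun F :: "bool list \<Rightarrow> int" where
  "F (a#b#c#d#e#r) = phi5 a b c d e + F (b#c#d#e#r)" | "F _ = 0"

fun Ex :: "bool list \<Rightarrow> nat" where
  "Ex (a#b#c#d#e#r) = nat (14 - 2*phi5 a b c d e) + Ex (b#c#d#e#r)" | "Ex _ = 0"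

lemma F_short: "length x < 5 \<Longrightarrow> F x = 0"
  by (induction x rule: F.induct) auto

lemma Ex_F: "4 \<le> length x \<Longrightarrow> int (Ex x) = 14*(int (length x) - 4) - 2*F x"
proof (induction x rule: F.induct)
  case (1 a b c d e r)
  have "phi5 a b c d e \<le> 7" by (rule phi5_le)
  then show ?case using 1 by auto
qed auto

lemma skew_cons2: "skewincident (a#b#r) (a'#b'#r') \<longleftrightarrow> (a\<and>b') \<or> (b\<and>a') \<or> skewincident (b#r) (b'#r')"
proof
  assume "skewincident (a#b#r) (a'#b'#r')"
  then obtain i where i: "i + 1 < length (a#b#r)"
    "((a#b#r) ! i \<and> (a'#b'#r') ! (i + 1)) \<or> ((a#b#r) ! (i + 1) \<and> (a'#b'#r') ! i)"
    unfolding skewincident_def by blast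
  show "(a\<and>b') \<or> (b\<and>a') \<or> skewincident (b#r) (b'#r')"
  proof (cases i)
    case 0 then show ?thesis using i by auto
  next
    case (Suc j) then show ?thesis using i unfolding skewincident_def
      by (intro disjI2) (rule exI[of _ j], auto)
  qed
next
  assume h: "(a\<and>b') \<or> (b\<and>a') \<or> skewincident (b#r) (b'#r')"
  show "skewincident (a#b#r) (a'#b'#r')"
  proof (cases "(a\<and>b') \<or> (b\<and>a')")
    case True then show ?thesis unfolding skewincident_def by (intro exI[of _ 0]) auto
  next
    case False
    then obtain j where "j + 1 < length (b#r)"
      "((b#r) ! j \<and> (b'#r') ! (j + 1)) \<or> ((b#r) ! (j + 1) \<and> (b'#r') ! j)"
      using h unfolding skewincident_def by blast
    then show ?thesis unfolding skewincident_def by (intro exI[of _ "Suc j"]) auto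
  qed
qed

lemma pair_ineq:
  "length x = length y \<Longrightarrow> 4 \<le> length x \<Longrightarrow> \<not> skewincident x y \<Longrightarrow>
   F x + F y \<le> 6*(int (length x) - 4) + Gp (x!0) (x!1) (x!2) (x!3) (y!0) (y!1) (y!2) (y!3)"
proof (induction x arbitrary: y rule: F.induct)
  case (1 a b c d e r)
  then obtain a' b' c' d' e' r' where y: "y = a'#b'#c'#d'#e'#r'" "length r' = length r"
    using 1(2)[symmetric] by (auto simp: length_Suc_conv)
  have ns: "\<not> skewincident (b#c#d#e#r) (b'#c'#d'#e'#r')" and
    cs: "\<not>(a\<and>b')" "\<not>(b\<and>a')" "\<not>(b\<and>c')" "\<not>(c\<and>b')" "\<not>(c\<and>d')" "\<not>(d\<and>c')" "\<not>(d\<and>e')" "\<not>(e\<and>d')"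
    using 1(4) unfolding y by (auto simp: skew_cons2)
  have IH: "F (b#c#d#e#r) + F (b'#c'#d'#e'#r') \<le> 6*(int (length (b#c#d#e#r)) - 4) + Gp b c d e b' c' d' e'"
    using 1(1)[of "b'#c'#d'#e'#r'"] ns y by simp
  have st: "phi5 a b c d e + phi5 a' b' c' d' e' + Gp b c d e b' c' d' e' \<le> 6 + Gp a b c d a' b' c' d'"
    by (rule step_check[OF cs])
  show ?case using IH st unfolding y by simp
next
  case ("2_5" v va vb vc)
  from "2_5" have "length y = Suc (Suc (Suc (Suc 0)))" by simp
  then obtain a' b' c' d' where y: "y = [a',b',c',d']" by (auto simp: length_Suc_conv)
  show ?case using Gp_bounds unfolding y by (simp add: F_short)
qed auto

lemma sum_bin_Suc:
  "sum g (binstrings (Suc m)) = sum (\<lambda>y. g (True#y)) (binstrings m) + sum (\<lambda>y. g (False#y)) (binstrings m)"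
proof -
  have fin: "finite (binstrings m)" using finite_bin by (simp add: binstrings_def)
  have eq: "binstrings (Suc m) = Cons True ` binstrings m \<union> Cons False ` binstrings m"
  proof
    show "binstrings (Suc m) \<subseteq> Cons True ` binstrings m \<union> Cons False ` binstrings m"
    proof
      fix x assume "x \<in> binstrings (Suc m)"
      then obtain h t where "x = h#t" "length t = m" by (auto simp: binstrings_def length_Suc_conv)
      then show "x \<in> Cons True ` binstrings m \<union> Cons False ` binstrings m"
        by (cases h) (auto simp: binstrings_def)
    qed
  qed (auto simp: binstrings_def)
  show ?thesis unfolding eq
    by (subst sum.union_disjoint) (auto simp: fin sum.reindex)
qed

definition cc :: real where "cc = 26/25"
definition Lam :: real where "Lam = 1317/500"

lemma eigen_check:
  "cc ^ nat (14 - 2*phi5 a b c d True) * V4 b c d True + cc ^ nat (14 - 2*phi5 a b c d False) * V4 b c d False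
   \<le> Lam * V4 a b c d"
  unfolding cc_def Lam_def phi5_def V4_def
  by (cases a; cases b; cases c; cases d) (simp_all add: power_divide)

lemma transfer:
  "sum (\<lambda>y. cc ^ Ex ([s0,s1,s2,s3] @ y)) (binstrings m) \<le> V4 s0 s1 s2 s3 * Lam ^ m"
proof (induction m arbitrary: s0 s1 s2 s3)
  case 0
  have "binstrings 0 = {[]}" by (auto simp: binstrings_def)
  then show ?case using V4_ge[of s0 s1 s2 s3] by simp
next
  case (Suc m)
  let ?e = "\<lambda>b. nat (14 - 2*phi5 s0 s1 s2 s3 b)"
  have "sum (\<lambda>y. cc ^ Ex ([s0,s1,s2,s3] @ y)) (binstrings (Suc m))
      = cc ^ ?e True * sum (\<lambda>y. cc ^ Ex ([s1,s2,s3,True] @ y)) (binstrings m)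
      + cc ^ ?e False * sum (\<lambda>y. cc ^ Ex ([s1,s2,s3,False] @ y)) (binstrings m)"
    unfolding sum_bin_Suc by (simp add: power_add sum_distrib_left)
  also have "\<dots> \<le> cc ^ ?e True * (V4 s1 s2 s3 True * Lam ^ m) + cc ^ ?e False * (V4 s1 s2 s3 False * Lam ^ m)"
    by (intro add_mono mult_left_mono Suc.IH) (auto simp: cc_def)
  also have "\<dots> = (cc ^ ?e True * V4 s1 s2 s3 True + cc ^ ?e False * V4 s1 s2 s3 False) * Lam ^ m"
    by (simp add: algebra_simps)
  also have "\<dots> \<le> (Lam * V4 s0 s1 s2 s3) * Lam ^ m"
    by (intro mult_right_mono eigen_check) (auto simp: Lam_def)
  finally show ?case by (simp add: algebra_simps)
qed

lemma total_sum: "sum (\<lambda>x. cc ^ Ex x) (binstrings (m+4)) \<le> 2772 * Lam ^ m"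
proof -
  have e: "binstrings (m + 4) = binstrings (Suc (Suc (Suc (Suc m))))" by (simp add: eval_nat_numeral)
  have "sum (\<lambda>x. cc ^ Ex x) (binstrings (m+4)) =
     (\<Sum>s0\<in>UNIV. \<Sum>s1\<in>UNIV. \<Sum>s2\<in>UNIV. \<Sum>s3\<in>UNIV. sum (\<lambda>y. cc ^ Ex ([s0,s1,s2,s3] @ y)) (binstrings m))"
    unfolding e by (simp add: sum_bin_Suc UNIV_bool)
  also have "\<dots> \<le> (\<Sum>s0\<in>UNIV. \<Sum>s1\<in>UNIV. \<Sum>s2\<in>UNIV. \<Sum>s3\<in>UNIV. V4 s0 s1 s2 s3 * Lam ^ m)"
    by (intro sum_mono transfer)
  also have "\<dots> = 2772 * Lam ^ m"
    by (simp add: UNIV_bool V4_def algebra_simps)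
  finally show ?thesis .
qed

lemma lam_lt: "Lam / cc^8 < 2 powr (0.96::real)"
proof -
  have "(2 powr (0.96::real))^25 = 2 powr 24" by (simp add: powr_realpow[symmetric] powr_powr)
  also have "\<dots> = 2^24" by (simp add: powr_realpow[symmetric])
  also have "(Lam / cc^8)^25 < 2^24" unfolding Lam_def cc_def by (simp add: power_divide)
  ultimately have "(Lam / cc^8)^25 < (2 powr (0.96::real))^25" by simp
  thus ?thesis by (rule power_less_imp_less_base) simp
qed

lemma bad_card:
  fixes m :: nat
  defines "bad \<equiv> {x \<in> binstrings (m+4). 2*F x \<le> 6*int m + 4}"
  shows "real (card bad) \<le> cc^4 * 2772 * (Lam / cc^8)^m"
proof -
  have cc1: "1 \<le> cc" by (simp add: cc_def)
  have fin: "finite (binstrings (m+4))" using finite_bin by (simp add: binstrings_def)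
  have "real (card bad) * cc^(8*m) = (\<Sum>x\<in>bad. cc^(8*m))" by simp
  also have "\<dots> \<le> (\<Sum>x\<in>bad. cc^4 * cc^Ex x)"
  proof (rule sum_mono)
    fix x assume "x \<in> bad"
    hence x: "length x = m+4" "2*F x \<le> 6*int m + 4" by (auto simp: bad_def binstrings_def)
    have "int (Ex x) = 14*int m - 2*F x" using Ex_F[of x] x by simp
    hence "8*m \<le> 4 + Ex x" using x by linarith
    hence "cc^(8*m) \<le> cc^(4 + Ex x)" by (rule power_increasing) (rule cc1)
    thus "cc^(8*m) \<le> cc^4 * cc^Ex x" by (simp add: power_add)
  qed
  also have "\<dots> \<le> (\<Sum>x\<in>binstrings (m+4). cc^4 * cc^Ex x)"
    by (rule sum_mono2[OF fin]) (auto simp: bad_def cc_def)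
  also have "\<dots> = cc^4 * (\<Sum>x\<in>binstrings (m+4). cc^Ex x)" by (simp add: sum_distrib_left)
  also have "\<dots> \<le> cc^4 * (2772 * Lam^m)" by (intro mult_left_mono total_sum) (auto simp: cc_def)
  finally have "real (card bad) * cc^(8*m) \<le> cc^4 * (2772 * Lam^m)" .
  moreover have "cc^(8*m) > 0" by (simp add: cc_def)
  ultimately have "real (card bad) \<le> cc^4 * (2772 * Lam^m) / cc^(8*m)" by (simp add: field_simps)
  also have "\<dots> = cc^4 * 2772 * (Lam / cc^8)^m" by (simp add: power_divide power_mult)
  finally show ?thesis .
qed

lemma lower_fam:
  fixes m :: nat
  defines "bad \<equiv> {x \<in> binstrings (m+4). 2*F x \<le> 6*int m + 4}"
  shows "2^(m+4) - card bad \<le> M (m+4)"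
proof -
  let ?B = "binstrings (m+4) - bad"
  have "skew_family (m+4) ?B"
    unfolding skew_family_def
  proof (intro conjI ballI impI)
    fix x y assume xy: "x \<in> ?B" "y \<in> ?B" "x \<noteq> y"
    hence l: "length x = m+4" "length y = m+4" and g: "2*F x > 6*int m + 4" "2*F y > 6*int m + 4"
      by (auto simp: bad_def binstrings_def)
    show "skewincident x y"
    proof (rule ccontr)
      assume "\<not> skewincident x y"
      from pair_ineq[OF _ _ this] l have "F x + F y \<le> 6*int m + Gp (x!0) (x!1) (x!2) (x!3) (y!0) (y!1) (y!2) (y!3)"
        by simp
      moreover have "Gp (x!0) (x!1) (x!2) (x!3) (y!0) (y!1) (y!2) (y!3) \<le> 4" using Gp_bounds by blast
      ultimately show False using g by linarith
    qed
  qed auto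
  hence "card ?B \<le> M (m+4)" using M_props by blast
  moreover have "card ?B = 2^(m+4) - card bad"
    using card_Diff_subset[of bad "binstrings (m+4)"] card_bin finite_subset[OF _ finite_bin]
    by (auto simp: bad_def binstrings_def)
  ultimately show ?thesis by simp
qed

lemma lower: "\<exists>N. \<forall>n\<ge>N. 2 ^ n - 2 powr (0.96 * real n) \<le> real (M n)"
proof -
  have lp: "0 < Lam / cc^8" by (simp add: Lam_def cc_def)
  obtain N where N: "\<And>m. m \<ge> N \<Longrightarrow> cc^4 * 2772 * (Lam / cc^8)^m \<le> (2 powr (0.96::real))^m"
    using pow_eventually[OF lp lam_lt] by blast
  have "2 ^ n - 2 powr (0.96 * real n) \<le> real (M n)" if "n \<ge> N + 4" for n
  proof -
    define m where "m = n - 4"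
    have m: "n = m + 4" "m \<ge> N" using that unfolding m_def by auto
    define bad where "bad = {x \<in> binstrings (m+4). 2*F x \<le> 6*int m + 4}"
    have c1: "real (card bad) \<le> (2 powr (0.96::real))^m"
      using bad_card[of m] N[OF m(2)] unfolding bad_def by linarith
    have "(2 powr (0.96::real))^m \<le> (2 powr 0.96)^n"
      using m by (intro power_increasing) (auto intro: ge_one_powr_ge_zero)
    also have "\<dots> = 2 powr (0.96 * real n)" by (simp add: powr_realpow[symmetric] powr_powr mult.commute)
    finally have c2: "real (card bad) \<le> 2 powr (0.96 * real n)" using c1 by linarith
    have "2^(m+4) - card bad \<le> M (m+4)" using lower_fam[of m] unfolding bad_def by simp
    hence "real (2^(m+4)) - real (card bad) \<le> real (M (m+4))" by linarith
    thus ?thesis using c2 m by simp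
  qed
  thus ?thesis by blast
qed

theorem theorem1:
  shows "\<exists>N. \<forall>n\<ge>N.
           2 ^ n - 2 powr (0.96 * real n) \<le> real (M n) \<and>
           real (M n) \<le> 2 ^ n - 2 powr (0.69 * real n)"
proof -
  obtain N1 where N1: "\<And>n. n \<ge> N1 \<Longrightarrow> 2 ^ n - 2 powr (0.96 * real n) \<le> real (M n)" using lower by blast
  obtain N2 where N2: "\<And>n. n \<ge> N2 \<Longrightarrow> real (M n) \<le> 2 ^ n - 2 powr (0.69 * real n)" using upper by blast
  show ?thesis
  proof (intro exI allI impI conjI)
    fix n assume "max N1 N2 \<le> n"
    then show "2 ^ n - 2 powr (0.96 * real n) \<le> real (M n)" "real (M n) \<le> 2 ^ n - 2 powr (0.69 * real n)"
      using N1 N2 by auto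
  qed
qed

end
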